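(* Let $s,t,p\ge 1$, $A,B\in GL(n)$ and $Q\in\mathcal{P}(n)$ with $k=\lambda_1(Q)>1$. If the equation $X^s+A^*X^{-t}A+B^*X^{-p}B=Q$ has a Hermitian positive definite solution, then $$\rho^2(A)<\frac{q^q k^{1+\tilde q}}{(q+1)^{q+1}}\quad\text{and}\quad \rho^2(B)<\frac{q^q k^{1+\tilde q}}{(q+1)^{q+1}},$$ where $q=\min\{t/s,p/s\}$ and $\tilde q=\max\{t/s,p/s\}$.
   Context: $GL(n)$: $n\times n$ complex nonsingular matrices; $\mathcal{P}(n)$: $n\times n$ Hermitian positive definite matrices. For Hermitian $M$, $\lambda_1(M)$ is its largest eigenvalue; $\rho(M)$ is the spectral radius. Real powers of positive definite matrices are defined by functional calculus. *)

theory Defs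
  imports "Jordan_Normal_Form.Spectral_Radius" "Jordan_Normal_Form.Schur_Decomposition"
begin

definition hermitian_mat :: "nat \<Rightarrow> complex mat \<Rightarrow> bool" where
  "hermitian_mat n M \<longleftrightarrow> M \<in> carrier_mat n n \<and> mat_adjoint M = M"

definition posdef_mat :: "nat \<Rightarrow> complex mat \<Rightarrow> bool" where
  "posdef_mat n M \<longleftrightarrow> hermitian_mat n M \<and>
     (\<forall>v \<in> carrier_vec n. v \<noteq> 0\<^sub>v n \<longrightarrow>
        (let z = (M *\<^sub>v v) \<bullet> conjugate v in Im z = 0 \<and> Re z > 0))"

definition unitary_mat :: "nat \<Rightarrow> complex mat \<Rightarrow> bool" where
  "unitary_mat n U \<longleftrightarrow> U \<in> carrier_mat n n \<and> mat_adjoint U * U = 1\<^sub>m n"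

definition diag_of :: "nat \<Rightarrow> (nat \<Rightarrow> complex) \<Rightarrow> complex mat" where
  "diag_of n d = mat n n (\<lambda>(i,j). if i = j then d i else 0)"

definition mat_rpow :: "nat \<Rightarrow> complex mat \<Rightarrow> real \<Rightarrow> complex mat" where
  "mat_rpow n X r = (SOME M. \<exists>U d. unitary_mat n U \<and> (\<forall>i<n. d i > 0) \<and>
      X = U * diag_of n (\<lambda>i. complex_of_real (d i)) * mat_adjoint U \<and>
      M = U * diag_of n (\<lambda>i. complex_of_real (d i powr r)) * mat_adjoint U)"

text \<open>Largest eigenvalue of a Hermitian matrix (eigenvalues are real).\<close>
definition lambda_max :: "complex mat \<Rightarrow> real" where
  "lambda_max M = Max (Re ` spectrum M)"

end

theory Submission
  imports Defs
begin
lemma adj_alt: "mat_adjoint A = mat (dim_col A) (dim_row A) (\<lambda>(i,j). conjugate (A $$ (j,i)))"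
  unfolding mat_adjoint_def
  by (rule eq_matI) (auto simp: mat_of_rows_def col_def)

lemma adj_dims[simp]: "dim_row (mat_adjoint A) = dim_col A" "dim_col (mat_adjoint A) = dim_row A"
  unfolding adj_alt by simp_all

lemma adj_carrier[simp]: "A \<in> carrier_mat n m \<Longrightarrow> mat_adjoint A \<in> carrier_mat m n"
  unfolding carrier_mat_def by simp

lemma adj_index[simp]: "i < dim_col A \<Longrightarrow> j < dim_row A \<Longrightarrow> mat_adjoint A $$ (i,j) = conjugate (A $$ (j,i))"
  unfolding adj_alt by simp

lemma adj_adj[simp]: "mat_adjoint (mat_adjoint (A :: 'a :: conjugatable_field mat)) = A"
  by (rule eq_matI) auto

lemma adj_mult:
  fixes A B :: "'a :: conjugatable_field mat"
  assumes A: "A \<in> carrier_mat n m" and B: "B \<in> carrier_mat m l"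
  shows "mat_adjoint (A * B) = mat_adjoint B * mat_adjoint A"
proof (rule eq_matI)
  fix i j assume i: "i < dim_row (mat_adjoint B * mat_adjoint A)" and j: "j < dim_col (mat_adjoint B * mat_adjoint A)"
  hence i: "i < l" and j: "j < n" using A B by auto
  have "mat_adjoint (A * B) $$ (i, j) = conjugate ((A * B) $$ (j, i))" using A B i j by simp
  also have "\<dots> = conjugate (\<Sum>k\<in>{0..<m}. A $$ (j,k) * B $$ (k,i))"
    using A B i j by (simp add: scalar_prod_def)
  also have "\<dots> = (\<Sum>k\<in>{0..<m}. conjugate (B $$ (k,i)) * conjugate (A $$ (j,k)))"
    by (simp add: sum_conjugate conjugate_dist_mul mult.commute)
  also have "\<dots> = (mat_adjoint B * mat_adjoint A) $$ (i, j)"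
    using A B i j by (simp add: scalar_prod_def)
  finally show "mat_adjoint (A * B) $$ (i, j) = (mat_adjoint B * mat_adjoint A) $$ (i, j)" .
qed (use A B in auto)

lemma adj_one[simp]: "mat_adjoint (1\<^sub>m n :: complex mat) = 1\<^sub>m n"
  by (rule eq_matI) auto

lemma adj_add:
  fixes A B :: "'a :: conjugatable_field mat"
  assumes A: "A \<in> carrier_mat n m" and B: "B \<in> carrier_mat n m"
  shows "mat_adjoint (A + B) = mat_adjoint A + mat_adjoint B"
  by (rule eq_matI) (use A B in \<open>auto simp: conjugate_dist_add\<close>)

lemma adj_ident:
  fixes M :: "'a :: {conjugatable_field} mat"
  assumes M: "M \<in> carrier_mat n m" and y: "y \<in> carrier_vec n" and v: "v \<in> carrier_vec m"
  shows "(mat_adjoint M *\<^sub>v y) \<bullet> conjugate v = y \<bullet> conjugate (M *\<^sub>v v)"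
proof -
  have "(mat_adjoint M *\<^sub>v y) \<bullet> conjugate v = (\<Sum>i<m. (\<Sum>j<n. conjugate (M $$ (j,i)) * y $ j) * conjugate (v $ i))"
    using M y v by (auto simp: scalar_prod_def mult_mat_vec_def row_def atLeast0LessThan intro!: sum.cong)
  also have "\<dots> = (\<Sum>i<m. \<Sum>j<n. conjugate (M $$ (j,i)) * y $ j * conjugate (v $ i))"
    by (simp add: sum_distrib_right)
  also have "\<dots> = (\<Sum>j<n. \<Sum>i<m. conjugate (M $$ (j,i)) * y $ j * conjugate (v $ i))"
    by (rule sum.swap)
  also have "\<dots> = (\<Sum>j<n. y $ j * conjugate (\<Sum>i<m. M $$ (j,i) * v $ i))"
    by (simp add: sum_distrib_left sum_conjugate conjugate_dist_mul mult_ac)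
  also have "\<dots> = y \<bullet> conjugate (M *\<^sub>v v)"
    using M y v by (auto simp: scalar_prod_def mult_mat_vec_def row_def atLeast0LessThan intro!: sum.cong)
  finally show ?thesis .
qed

lemma adj_zero[simp]: "mat_adjoint (0\<^sub>m n m :: complex mat) = 0\<^sub>m m n"
  by (rule eq_matI) auto

lemma row_adj: "i < dim_col A \<Longrightarrow> row (mat_adjoint A) i = conjugate (col A i)"
  by (rule eq_vecI) auto

lemma unitary_right:
  assumes "unitary_mat n U" shows "U * mat_adjoint U = 1\<^sub>m n"
  using assms mat_mult_left_right_inverse[of "mat_adjoint U" n U] unfolding unitary_mat_def by auto

lemma unitary_mult:
  assumes U: "unitary_mat n U" and V: "unitary_mat n V"
  shows "unitary_mat n (U * V)"
proof -
  have c: "U \<in> carrier_mat n n" "V \<in> carrier_mat n n" using U V unfolding unitary_mat_def by auto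
  have "mat_adjoint (U * V) * (U * V) = mat_adjoint V * mat_adjoint U * (U * V)"
    by (simp add: adj_mult[OF c])
  also have "\<dots> = mat_adjoint V * (mat_adjoint U * (U * V))"
    by (rule assoc_mult_mat[of _ n n _ n _ n]) (use c in auto)
  also have "mat_adjoint U * (U * V) = (mat_adjoint U * U) * V"
    by (rule assoc_mult_mat[of _ n n _ n _ n, symmetric]) (use c in auto)
  also have "\<dots> = V" using U c unfolding unitary_mat_def by simp
  also have "mat_adjoint V * V = 1\<^sub>m n" using V unfolding unitary_mat_def by simp
  finally show ?thesis using c unfolding unitary_mat_def by auto
qed

lemma unitary_adj:
  assumes U: "unitary_mat n U" shows "unitary_mat n (mat_adjoint U)"
  using unitary_right[OF U] U unfolding unitary_mat_def by auto

definition nrm :: "complex vec \<Rightarrow> complex vec" where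
  "nrm w = complex_of_real (1 / sqrt (Re (w \<bullet>c w))) \<cdot>\<^sub>v w"

lemma cnorm_real: "(w :: complex vec) \<bullet>c w = complex_of_real (Re (w \<bullet>c w))"
  using conjugate_square_ge_0_vec[of w] by (simp add: less_eq_complex_def complex_eq_iff)

lemma cnorm_pos: "(w :: complex vec) \<in> carrier_vec n \<Longrightarrow> w \<noteq> 0\<^sub>v n \<Longrightarrow> Re (w \<bullet>c w) > 0"
  using conjugate_square_greater_0_vec[of w n] by (simp add: less_complex_def)

lemma nrm_carrier[simp]: "w \<in> carrier_vec n \<Longrightarrow> nrm w \<in> carrier_vec n"
  by (simp add: nrm_def)

lemma nrm_sprod:
  assumes a: "a \<in> carrier_vec n" and b: "b \<in> carrier_vec n"
  shows "nrm a \<bullet>c nrm b = complex_of_real (1 / sqrt (Re (a \<bullet>c a))) * complex_of_real (1 / sqrt (Re (b \<bullet>c b))) * (a \<bullet>c b)"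
  using a b by (simp add: nrm_def conjugate_smult_vec)

lemma nrm_unit:
  assumes a: "a \<in> carrier_vec n" "a \<noteq> 0\<^sub>v n"
  shows "nrm a \<bullet>c nrm a = 1"
proof -
  have p: "Re (a \<bullet>c a) > 0" using cnorm_pos[OF a] .
  define r where "r = Re (a \<bullet>c a)"
  have "nrm a \<bullet>c nrm a = complex_of_real (1/sqrt r) * complex_of_real (1/sqrt r) * (a \<bullet>c a)"
    unfolding r_def by (rule nrm_sprod[OF a(1) a(1)])
  also have "a \<bullet>c a = complex_of_real r" unfolding r_def by (rule cnorm_real)
  also have "complex_of_real (1/sqrt r) * complex_of_real (1/sqrt r) * complex_of_real r
     = complex_of_real (1/sqrt r * (1/sqrt r) * r)" by (simp only: of_real_mult)
  also have "1/sqrt r * (1/sqrt r) * r = 1"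
  proof -
    have "sqrt r * sqrt r = r" using p r_def by simp
    thus ?thesis using p r_def by (simp add: field_simps)
  qed
  finally show ?thesis by simp
qed

lemma nrm_id: "a \<bullet>c a = 1 \<Longrightarrow> nrm a = a"
  by (simp add: nrm_def)

lemma unit_completion:
  fixes u :: "complex vec"
  assumes u: "u \<in> carrier_vec n" and u1: "u \<bullet>c u = 1"
  shows "\<exists>W. unitary_mat n W \<and> col W 0 = u"
proof -
  have u0: "u \<noteq> 0\<^sub>v n" using u1 u by auto
  interpret cof_vec_space n "TYPE(complex)" .
  define b where "b = basis_completion u"
  note bc = basis_completion[OF u u0, folded b_def]
  define ws where "ws = gram_schmidt n b"
  note gs = gram_schmidt_result[OF bc(2) bc(4) bc(5) ws_def]
  have bu: "b = u # tl b" unfolding b_def basis_completion_def Let_def by simp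
  have hd: "hd ws = u" unfolding ws_def by (subst bu) (rule gram_schmidt_hd[OF u])
  have len: "length ws = n" using gs bc by simp
  have n0: "n > 0" using len hd u0 u by (cases ws) auto
  define ws' where "ws' = map nrm ws"
  define W where "W = mat_of_cols n ws'"
  have wsc: "\<And>i. i < n \<Longrightarrow> ws ! i \<in> carrier_vec n" using gs len by auto
  have ws0: "\<And>i. i < n \<Longrightarrow> ws ! i \<noteq> 0\<^sub>v n"
  proof
    fix i assume i: "i < n" and z: "ws ! i = 0\<^sub>v n"
    have "ws ! i \<bullet>c ws ! i \<noteq> 0" using corthogonalD[OF gs(2), of i i] i len by auto
    thus False using z by simp
  qed
  have colW: "\<And>i. i < n \<Longrightarrow> col W i = nrm (ws ! i)"
    unfolding W_def ws'_def using wsc len by (subst col_mat_of_cols) auto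
  have W: "W \<in> carrier_mat n n" unfolding W_def ws'_def using len by auto
  have WW: "mat_adjoint W * W = 1\<^sub>m n"
  proof (rule eq_matI)
    fix i j assume "i < dim_row (1\<^sub>m n :: complex mat)" "j < dim_col (1\<^sub>m n :: complex mat)"
    hence i: "i < n" and j: "j < n" by auto
    have "(mat_adjoint W * W) $$ (i,j) = conjugate (col W i) \<bullet> col W j"
      using W i j by (simp add: row_adj)
    also have "\<dots> = conjugate (nrm (ws ! i)) \<bullet> nrm (ws ! j)"
      using i j by (simp add: colW)
    also have "\<dots> = nrm (ws ! j) \<bullet>c nrm (ws ! i)"
      by (rule comm_scalar_prod[of _ n]) (use i j wsc in auto)
    also have "\<dots> = 1\<^sub>m n $$ (i,j)"
    proof (cases "i = j")
      case True thus ?thesis using nrm_unit[OF wsc ws0] i by simp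
    next
      case False
      hence "ws ! j \<bullet>c ws ! i = 0" using corthogonalD[OF gs(2), of j i] i j len by auto
      thus ?thesis using False i j nrm_sprod[OF wsc[OF j] wsc[OF i]] by simp
    qed
    finally show "(mat_adjoint W * W) $$ (i,j) = 1\<^sub>m n $$ (i,j)" .
  qed (use W in auto)
  have c0: "col W 0 = u" using colW[OF n0] hd n0 len u1 by (cases ws) (auto simp: nrm_id)
  have "unitary_mat n W" unfolding unitary_mat_def using W WW by blast
  thus ?thesis using c0 by blast
qed

lemma adj_four_block:
  fixes A B C D :: "complex mat"
  assumes "A \<in> carrier_mat n1 m1" "B \<in> carrier_mat n1 m2" "C \<in> carrier_mat n2 m1" "D \<in> carrier_mat n2 m2"
  shows "mat_adjoint (four_block_mat A B C D) = four_block_mat (mat_adjoint A) (mat_adjoint C) (mat_adjoint B) (mat_adjoint D)"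
  by (rule eq_matI) (use assms in auto)

lemma hermitian_diag:
  fixes A :: "complex mat"
  assumes "A \<in> carrier_mat n n" "mat_adjoint A = A"
  shows "\<exists>U. unitary_mat n U \<and> diagonal_mat (mat_adjoint U * A * U)"
  using assms
proof (induct n arbitrary: A)
  case 0
  have "unitary_mat 0 (1\<^sub>m 0)" unfolding unitary_mat_def by simp
  moreover have "diagonal_mat (mat_adjoint (1\<^sub>m 0) * A * 1\<^sub>m 0)" unfolding diagonal_mat_def by simp
  ultimately show ?case by blast
next
  case (Suc m A)
  define n where "n = Suc m"
  have A: "A \<in> carrier_mat n n" and hA: "mat_adjoint A = A" using Suc(2,3) n_def by auto
  obtain e where "e \<in> spectrum A" using spectrum_non_empty[OF A] n_def by auto
  then obtain v where v: "v \<in> carrier_vec n" "v \<noteq> 0\<^sub>v n" and Av: "A *\<^sub>v v = e \<cdot>\<^sub>v v"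
    using A unfolding spectrum_def eigenvalue_def eigenvector_def by auto
  define c where "c = complex_of_real (1 / sqrt (Re (v \<bullet>c v)))"
  define u where "u = nrm v"
  have uc: "u = c \<cdot>\<^sub>v v" unfolding u_def nrm_def c_def ..
  have u: "u \<in> carrier_vec n" unfolding u_def using v by simp
  have u1: "u \<bullet>c u = 1" unfolding u_def by (rule nrm_unit[OF v])
  have Au: "A *\<^sub>v u = e \<cdot>\<^sub>v u" unfolding uc
    using A v Av by (simp add: mult_mat_vec smult_smult_assoc mult.commute)
  obtain W where W: "unitary_mat n W" and W0: "col W 0 = u" using unit_completion[OF u u1] by blast
  have Wc: "W \<in> carrier_mat n n" using W unfolding unitary_mat_def by auto
  have WW: "mat_adjoint W * W = 1\<^sub>m n" using W unfolding unitary_mat_def by auto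
  define A' where "A' = mat_adjoint W * A * W"
  have A': "A' \<in> carrier_mat n n" unfolding A'_def using Wc A by auto
  have hA': "mat_adjoint A' = A'"
  proof -
    have "mat_adjoint A' = mat_adjoint W * mat_adjoint (mat_adjoint W * A)"
      unfolding A'_def by (rule adj_mult[of _ n n _ n]) (use Wc A in auto)
    also have "mat_adjoint (mat_adjoint W * A) = mat_adjoint A * W"
      by (subst adj_mult[of _ n n _ n]) (use Wc A in auto)
    finally show ?thesis unfolding A'_def hA using Wc A by (simp add: assoc_mult_mat[of _ n n _ n _ n])
  qed
  have n0: "0 < n" unfolding n_def by simp
  have colA': "col A' 0 = e \<cdot>\<^sub>v unit_vec n 0"
  proof -
    have "col A' 0 = (mat_adjoint W * A) *\<^sub>v col W 0" unfolding A'_def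
      by (rule col_mult2[of _ n n]) (use Wc A n0 in auto)
    also have "\<dots> = mat_adjoint W *\<^sub>v (A *\<^sub>v u)" unfolding W0
      by (rule assoc_mult_mat_vec[of _ n n _ n]) (use Wc A u in auto)
    also have "\<dots> = e \<cdot>\<^sub>v (mat_adjoint W *\<^sub>v col W 0)" unfolding Au W0
      by (rule mult_mat_vec[of _ n n]) (use Wc u in auto)
    also have "mat_adjoint W *\<^sub>v col W 0 = col (mat_adjoint W * W) 0"
      by (rule col_mult2[of _ n n, symmetric]) (use Wc n0 in auto)
    also have "\<dots> = unit_vec n 0" unfolding WW using n0 by simp
    finally show ?thesis .
  qed
  have Ai0: "\<And>i. i < n \<Longrightarrow> A' $$ (i, 0) = (if i = 0 then e else 0)"
  proof -
    fix i assume i: "i < n"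
    have "A' $$ (i, 0) = col A' 0 $ i" using i A' n0 by simp
    thus "A' $$ (i, 0) = (if i = 0 then e else 0)" unfolding colA' using i by simp
  qed
  have Aherm: "\<And>i j. i < n \<Longrightarrow> j < n \<Longrightarrow> A' $$ (i, j) = conjugate (A' $$ (j, i))"
  proof -
    fix i j assume i: "i < n" and j: "j < n"
    have "A' $$ (i, j) = mat_adjoint A' $$ (i, j)" using hA' by simp
    also have "\<dots> = conjugate (A' $$ (j, i))" using i j A' by simp
    finally show "A' $$ (i, j) = conjugate (A' $$ (j, i))" .
  qed
  have A0j: "A' $$ (0, j) = 0" if j: "0 < j" "j < n" for j
  proof -
    have "A' $$ (0, j) = conjugate (A' $$ (j, 0))" using Aherm[OF n0 j(2)] .
    also have "A' $$ (j, 0) = 0" using Ai0[OF j(2)] j(1) by simp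
    finally show ?thesis by simp
  qed
  define A1 where "A1 = mat 1 1 (\<lambda>_. A' $$ (0,0))"
  define A3 where "A3 = mat m m (\<lambda>(i,j). A' $$ (Suc i, Suc j))"
  have A1: "A1 \<in> carrier_mat 1 1" and A3: "A3 \<in> carrier_mat m m" unfolding A1_def A3_def by auto
  have A'b: "A' = four_block_mat A1 (0\<^sub>m 1 m) (0\<^sub>m m 1) A3"
  proof (rule eq_matI)
    fix i j assume i: "i < dim_row (four_block_mat A1 (0\<^sub>m 1 m) (0\<^sub>m m 1) A3)"
      and j: "j < dim_col (four_block_mat A1 (0\<^sub>m 1 m) (0\<^sub>m m 1) A3)"
    hence i: "i < n" and j: "j < n" using A1 A3 n_def by auto
    show "A' $$ (i, j) = four_block_mat A1 (0\<^sub>m 1 m) (0\<^sub>m m 1) A3 $$ (i, j)"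
    proof (cases "i = 0")
      case True thus ?thesis using i j A0j A1 A3 n_def by (cases "j = 0") (auto simp: A1_def)
    next
      case False
      then obtain i' where i': "i = Suc i'" by (cases i) auto
      show ?thesis
      proof (cases "j = 0")
        case True thus ?thesis using i j Ai0 A1 A3 i' n_def by auto
      next
        case False
        then obtain j' where j': "j = Suc j'" by (cases j) auto
        have ij': "i' < m" "j' < m" using i j i' j' n_def by auto
        have "four_block_mat A1 (0\<^sub>m 1 m) (0\<^sub>m m 1) A3 $$ (i, j) = A3 $$ (i', j')"
          using ij' i' j' A1 A3 by simp
        also have "A3 $$ (i', j') = A' $$ (i, j)" using ij' i' j' by (simp add: A3_def)
        finally show ?thesis by simp
      qed
    qed
  qed (use A' A1 A3 n_def in auto)
  have hA3: "mat_adjoint A3 = A3"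
  proof (rule eq_matI)
    fix i j assume "i < dim_row A3" "j < dim_col A3"
    hence i: "i < m" and j: "j < m" using A3 by auto
    have "mat_adjoint A3 $$ (i, j) = conjugate (A' $$ (Suc j, Suc i))"
      using i j A3 by (simp add: A3_def)
    also have "\<dots> = A' $$ (Suc i, Suc j)"
      using Aherm[of "Suc i" "Suc j"] i j n_def by simp
    finally show "mat_adjoint A3 $$ (i, j) = A3 $$ (i, j)" using i j by (simp add: A3_def)
  qed (use A3 in auto)
  obtain V where V: "unitary_mat m V" and D3: "diagonal_mat (mat_adjoint V * A3 * V)"
    using Suc(1)[OF A3 hA3] by blast
  have Vc: "V \<in> carrier_mat m m" using V unfolding unitary_mat_def by auto
  have VV: "mat_adjoint V * V = 1\<^sub>m m" using V unfolding unitary_mat_def by auto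
  define F where "F = four_block_mat (1\<^sub>m 1) (0\<^sub>m 1 m) (0\<^sub>m m 1) V"
  have Fc: "F \<in> carrier_mat n n" unfolding F_def n_def using Vc by auto
  have adjF: "mat_adjoint F = four_block_mat (1\<^sub>m 1) (0\<^sub>m 1 m) (0\<^sub>m m 1) (mat_adjoint V)"
    unfolding F_def by (subst adj_four_block[of _ 1 1 _ m _ m]) (use Vc in auto)
  have Vac: "mat_adjoint V \<in> carrier_mat m m" using Vc by simp
  have "mat_adjoint F * F = four_block_mat (1\<^sub>m 1 * 1\<^sub>m 1 + 0\<^sub>m 1 m * 0\<^sub>m m 1) (1\<^sub>m 1 * 0\<^sub>m 1 m + 0\<^sub>m 1 m * V)
      (0\<^sub>m m 1 * 1\<^sub>m 1 + mat_adjoint V * 0\<^sub>m m 1) (0\<^sub>m m 1 * 0\<^sub>m 1 m + mat_adjoint V * V)"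
    by (unfold adjF, unfold F_def, rule mult_four_block_mat) (use Vc in auto)
  also have "\<dots> = 1\<^sub>m n" using Vc unfolding VV n_def by simp
  finally have FF: "mat_adjoint F * F = 1\<^sub>m n" .
  have F: "unitary_mat n F" unfolding unitary_mat_def using Fc FF by blast
  define U where "U = W * F"
  have U: "unitary_mat n U" unfolding U_def by (rule unitary_mult[OF W F])
  have "mat_adjoint U * A * U = mat_adjoint F * A' * F"
    unfolding U_def A'_def using Wc Fc A
    by (simp add: adj_mult[of _ n n _ n] assoc_mult_mat[of _ n n _ n _ n] mult_carrier_mat[of _ n n _ n])
  also have "mat_adjoint F * A' = four_block_mat (1\<^sub>m 1 * A1 + 0\<^sub>m 1 m * 0\<^sub>m m 1) (1\<^sub>m 1 * 0\<^sub>m 1 m + 0\<^sub>m 1 m * A3)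
      (0\<^sub>m m 1 * A1 + mat_adjoint V * 0\<^sub>m m 1) (0\<^sub>m m 1 * 0\<^sub>m 1 m + mat_adjoint V * A3)"
    unfolding adjF A'b by (rule mult_four_block_mat) (use Vc A1 A3 in auto)
  also have "\<dots> = four_block_mat A1 (0\<^sub>m 1 m) (0\<^sub>m m 1) (mat_adjoint V * A3)"
  proof -
    have "mat_adjoint V * A3 \<in> carrier_mat m m" by (rule mult_carrier_mat[OF adj_carrier[OF Vc] A3])
    thus ?thesis using Vc A1 A3 by simp
  qed
  also have "\<dots> * F = four_block_mat (A1 * 1\<^sub>m 1 + 0\<^sub>m 1 m * 0\<^sub>m m 1) (A1 * 0\<^sub>m 1 m + 0\<^sub>m 1 m * V)
      (0\<^sub>m m 1 * 1\<^sub>m 1 + (mat_adjoint V * A3) * 0\<^sub>m m 1) (0\<^sub>m m 1 * 0\<^sub>m 1 m + (mat_adjoint V * A3) * V)"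
    unfolding F_def by (rule mult_four_block_mat) (use Vc A1 A3 in auto)
  also have "\<dots> = four_block_mat A1 (0\<^sub>m 1 m) (0\<^sub>m m 1) (mat_adjoint V * A3 * V)"
  proof -
    have "mat_adjoint V * A3 * V \<in> carrier_mat m m" by (rule mult_carrier_mat[OF mult_carrier_mat[OF adj_carrier[OF Vc] A3] Vc])
    thus ?thesis using Vc A1 A3 by simp
  qed
  finally have eq: "mat_adjoint U * A * U = four_block_mat A1 (0\<^sub>m 1 m) (0\<^sub>m m 1) (mat_adjoint V * A3 * V)" .
  have D3c: "mat_adjoint V * A3 * V \<in> carrier_mat m m" by (rule mult_carrier_mat[OF mult_carrier_mat[OF adj_carrier[OF Vc] A3] Vc])
  have "diagonal_mat (four_block_mat A1 (0\<^sub>m 1 m) (0\<^sub>m m 1) (mat_adjoint V * A3 * V))"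
    unfolding diagonal_mat_def
  proof (intro allI impI)
    fix i j assume i: "i < dim_row (four_block_mat A1 (0\<^sub>m 1 m) (0\<^sub>m m 1) (mat_adjoint V * A3 * V))"
      and j: "j < dim_col (four_block_mat A1 (0\<^sub>m 1 m) (0\<^sub>m m 1) (mat_adjoint V * A3 * V))"
      and ij: "i \<noteq> j"
    have i': "i < 1 + m" and j': "j < 1 + m" using i j A1 D3c by auto
    show "four_block_mat A1 (0\<^sub>m 1 m) (0\<^sub>m m 1) (mat_adjoint V * A3 * V) $$ (i, j) = 0"
      using i' j' ij A1 D3c D3 unfolding diagonal_mat_def by auto
  qed
  thus ?case using U eq n_def by auto
qed

lemma diag_carrier[simp]: "diag_of n f \<in> carrier_mat n n"
  by (simp add: diag_of_def)

lemma diag_dims[simp]: "dim_row (diag_of n f) = n" "dim_col (diag_of n f) = n"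
  by (simp_all add: diag_of_def)

lemma diag_index[simp]: "i < n \<Longrightarrow> j < n \<Longrightarrow> diag_of n f $$ (i,j) = (if i = j then f i else 0)"
  by (simp add: diag_of_def)

lemma sum_if_single: assumes i: "i < (n::nat)"
  shows "(\<Sum>k\<in>{0..<n}. (if i = k then c else 0) * (x k :: complex)) = c * x i"
proof -
  have "(\<Sum>k\<in>{0..<n}. (if i = k then c else 0) * (x k :: complex)) = (\<Sum>k\<in>{0..<n}. if i = k then c * x k else 0)"
    by (rule sum.cong) auto
  also have "\<dots> = c * x i" using i by (subst sum.delta') auto
  finally show ?thesis .
qed

lemma sum_if_single2: assumes i: "i < (n::nat)"
  shows "(\<Sum>k\<in>{0..<n}. (x k :: complex) * (if k = i then c k else 0)) = x i * c i"
proof -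
  have "(\<Sum>k\<in>{0..<n}. (x k :: complex) * (if k = i then c k else 0)) = (\<Sum>k\<in>{0..<n}. if k = i then x k * c k else 0)"
    by (rule sum.cong) auto
  also have "\<dots> = x i * c i" using i by (subst sum.delta) auto
  finally show ?thesis .
qed

lemma diag_mult_left:
  assumes M: "M \<in> carrier_mat n m" and i: "i < n" and j: "j < m"
  shows "(diag_of n f * M) $$ (i,j) = f i * M $$ (i,j)"
proof -
  have "(diag_of n f * M) $$ (i,j) = (\<Sum>k\<in>{0..<n}. (if i = k then f i else 0) * M $$ (k,j))"
    using M i j by (simp add: scalar_prod_def)
  also have "\<dots> = f i * M $$ (i,j)" by (rule sum_if_single[OF i])
  finally show ?thesis .
qed

lemma diag_mult_right:
  assumes M: "M \<in> carrier_mat m n" and i: "i < m" and j: "j < n"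
  shows "(M * diag_of n f) $$ (i,j) = M $$ (i,j) * f j"
proof -
  have "(M * diag_of n f) $$ (i,j) = (\<Sum>k\<in>{0..<n}. M $$ (i,k) * (if k = j then f k else 0))"
    using M i j by (simp add: scalar_prod_def)
  also have "\<dots> = M $$ (i,j) * f j" by (rule sum_if_single2[OF j])
  finally show ?thesis .
qed

lemma diag_mult_vec:
  assumes w: "w \<in> carrier_vec n"
  shows "diag_of n f *\<^sub>v w = vec n (\<lambda>i. f i * w $ i)"
proof (rule eq_vecI)
  fix i assume "i < dim_vec (vec n (\<lambda>i. f i * w $ i))"
  hence i: "i < n" by simp
  have "(diag_of n f *\<^sub>v w) $ i = (\<Sum>k\<in>{0..<n}. (if i = k then f i else 0) * w $ k)"
    using w i by (simp add: scalar_prod_def)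
  also have "\<dots> = f i * w $ i" by (rule sum_if_single[OF i])
  finally show "(diag_of n f *\<^sub>v w) $ i = vec n (\<lambda>i. f i * w $ i) $ i" using i by simp
qed simp

lemma diag_quad:
  assumes w: "w \<in> carrier_vec n"
  shows "(diag_of n (\<lambda>i. complex_of_real (g i)) *\<^sub>v w) \<bullet> conjugate w
     = complex_of_real (\<Sum>i<n. g i * (cmod (w $ i))\<^sup>2)"
proof -
  have "(diag_of n (\<lambda>i. complex_of_real (g i)) *\<^sub>v w) \<bullet> conjugate w
     = (\<Sum>i\<in>{0..<n}. complex_of_real (g i) * w $ i * cnj (w $ i))"
    using w by (simp add: diag_mult_vec scalar_prod_def)
  also have "\<dots> = (\<Sum>i\<in>{0..<n}. complex_of_real (g i * (cmod (w $ i))\<^sup>2))"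
    by (rule sum.cong) (simp_all add: complex_norm_square[symmetric] mult.assoc)
  also have "\<dots> = complex_of_real (\<Sum>i<n. g i * (cmod (w $ i))\<^sup>2)"
    by (simp add: atLeast0LessThan)
  finally show ?thesis .
qed

lemma quad_conj:
  assumes U: "U \<in> carrier_mat n n" and D: "D \<in> carrier_mat n n" and v: "v \<in> carrier_vec n"
  shows "((U * D * mat_adjoint U) *\<^sub>v v) \<bullet> conjugate v
     = (D *\<^sub>v (mat_adjoint U *\<^sub>v v)) \<bullet> conjugate (mat_adjoint U *\<^sub>v v)"
proof -
  have Uv: "mat_adjoint U *\<^sub>v v \<in> carrier_vec n" by (rule mult_mat_vec_carrier[OF adj_carrier[OF U] v])
  have "(U * D * mat_adjoint U) *\<^sub>v v = (U * D) *\<^sub>v (mat_adjoint U *\<^sub>v v)"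
    by (rule assoc_mult_mat_vec[of _ n n _ n]) (use U D v in auto)
  also have "\<dots> = U *\<^sub>v (D *\<^sub>v (mat_adjoint U *\<^sub>v v))"
    by (rule assoc_mult_mat_vec[of _ n n _ n]) (use U D Uv in auto)
  finally have e: "(U * D * mat_adjoint U) *\<^sub>v v = mat_adjoint (mat_adjoint U) *\<^sub>v (D *\<^sub>v (mat_adjoint U *\<^sub>v v))" by simp
  show ?thesis unfolding e
    by (rule adj_ident[of _ n n]) (use U D v Uv in auto)
qed

lemma unitary_carrier: "unitary_mat n U \<Longrightarrow> U \<in> carrier_mat n n"
  unfolding unitary_mat_def by auto

lemma unitary_left: "unitary_mat n U \<Longrightarrow> mat_adjoint U * U = 1\<^sub>m n"
  unfolding unitary_mat_def by auto

lemma U_cancel: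
  assumes U: "unitary_mat n U" and Z: "Z \<in> carrier_mat n m"
  shows "U * (mat_adjoint U * Z) = Z" "mat_adjoint U * (U * Z) = Z"
proof -
  have Uc: "U \<in> carrier_mat n n" by (rule unitary_carrier[OF U])
  have "U * (mat_adjoint U * Z) = (U * mat_adjoint U) * Z"
    by (rule assoc_mult_mat[symmetric, of _ n n _ n _ m]) (use Uc Z in auto)
  thus "U * (mat_adjoint U * Z) = Z" using unitary_right[OF U] Z by simp
  have "mat_adjoint U * (U * Z) = (mat_adjoint U * U) * Z"
    by (rule assoc_mult_mat[symmetric, of _ n n _ n _ m]) (use Uc Z in auto)
  thus "mat_adjoint U * (U * Z) = Z" using unitary_left[OF U] Z by simp
qed

lemma key_left:
  assumes U: "unitary_mat n U" and U': "unitary_mat n U'" and G: "G \<in> carrier_mat n n"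
  shows "mat_adjoint U * (U * G * mat_adjoint U) * U' = G * (mat_adjoint U * U')"
proof -
  have c: "U \<in> carrier_mat n n" "U' \<in> carrier_mat n n" using U U' by (auto simp: unitary_carrier)
  have a: "mat_adjoint U \<in> carrier_mat n n" using c by simp
  have "mat_adjoint U * (U * G * mat_adjoint U) * U' = mat_adjoint U * (U * (G * (mat_adjoint U * U')))"
    using c G a by (simp add: assoc_mult_mat[of _ n n _ n _ n] mult_carrier_mat[of _ n n _ n])
  also have "\<dots> = G * (mat_adjoint U * U')"
    by (rule U_cancel(2)[OF U mult_carrier_mat[OF G mult_carrier_mat[OF a c(2)]]])
  finally show ?thesis .
qed

lemma key_right:
  assumes U: "unitary_mat n U" and U': "unitary_mat n U'" and G: "G \<in> carrier_mat n n"
  shows "mat_adjoint U * (U' * G * mat_adjoint U') * U' = (mat_adjoint U * U') * G"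
proof -
  have c: "U \<in> carrier_mat n n" "U' \<in> carrier_mat n n" using U U' by (auto simp: unitary_carrier)
  have a: "mat_adjoint U' \<in> carrier_mat n n" "mat_adjoint U \<in> carrier_mat n n" using c by auto
  have "mat_adjoint U * (U' * G * mat_adjoint U') * U' = mat_adjoint U * (U' * (G * (mat_adjoint U' * U')))"
    using c G a by (simp add: assoc_mult_mat[of _ n n _ n _ n] mult_carrier_mat[of _ n n _ n])
  also have "mat_adjoint U' * U' = 1\<^sub>m n" by (rule unitary_left[OF U'])
  also have "mat_adjoint U * (U' * (G * 1\<^sub>m n)) = (mat_adjoint U * U') * G"
    using c G a by (simp add: assoc_mult_mat[of _ n n _ n _ n] mult_carrier_mat[of _ n n _ n])
  finally show ?thesis .
qed

lemma conj_back:
  assumes U: "unitary_mat n U" and U': "unitary_mat n U'" and P: "P \<in> carrier_mat n n"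
  shows "U * (mat_adjoint U * P * U') * mat_adjoint U' = P"
proof -
  have c: "U \<in> carrier_mat n n" "U' \<in> carrier_mat n n" using U U' by (auto simp: unitary_carrier)
  have a: "mat_adjoint U' \<in> carrier_mat n n" "mat_adjoint U \<in> carrier_mat n n" using c by auto
  have "U * (mat_adjoint U * P * U') * mat_adjoint U' = U * (mat_adjoint U * (P * (U' * mat_adjoint U')))"
    using c P a by (simp add: assoc_mult_mat[of _ n n _ n _ n] mult_carrier_mat[of _ n n _ n])
  also have "U' * mat_adjoint U' = 1\<^sub>m n" by (rule unitary_right[OF U'])
  also have "U * (mat_adjoint U * (P * 1\<^sub>m n)) = P"
    using U_cancel(1)[OF U P] P by simp
  finally show ?thesis .
qed

lemma calc_unique:
  fixes d d' :: "nat \<Rightarrow> real" and f :: "real \<Rightarrow> real"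
  assumes U: "unitary_mat n U" and U': "unitary_mat n U'"
    and e: "U * diag_of n (\<lambda>i. complex_of_real (d i)) * mat_adjoint U
          = U' * diag_of n (\<lambda>i. complex_of_real (d' i)) * mat_adjoint U'"
  shows "U * diag_of n (\<lambda>i. complex_of_real (f (d i))) * mat_adjoint U
       = U' * diag_of n (\<lambda>i. complex_of_real (f (d' i))) * mat_adjoint U'"
proof -
  have c: "U \<in> carrier_mat n n" "U' \<in> carrier_mat n n" using U U' by (auto simp: unitary_carrier)
  define W where "W = mat_adjoint U * U'"
  have Wc: "W \<in> carrier_mat n n" unfolding W_def using c by auto
  have comm: "diag_of n (\<lambda>i. complex_of_real (d i)) * W = W * diag_of n (\<lambda>i. complex_of_real (d' i))"
    using key_left[OF U U' diag_carrier, of "\<lambda>i. complex_of_real (d i)"]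
      key_right[OF U U' diag_carrier, of "\<lambda>i. complex_of_real (d' i)"] e unfolding W_def by simp
  have ent: "complex_of_real (d i) * W $$ (i,j) = W $$ (i,j) * complex_of_real (d' j)"
    if i: "i < n" and j: "j < n" for i j
    using arg_cong[OF comm, of "\<lambda>M. M $$ (i,j)"] diag_mult_left[OF Wc i j] diag_mult_right[OF Wc i j] by simp
  have comm2: "diag_of n (\<lambda>i. complex_of_real (f (d i))) * W = W * diag_of n (\<lambda>i. complex_of_real (f (d' i)))"
  proof (rule eq_matI)
    fix i j assume "i < dim_row (W * diag_of n (\<lambda>i. complex_of_real (f (d' i))))"
      "j < dim_col (W * diag_of n (\<lambda>i. complex_of_real (f (d' i))))"
    hence i: "i < n" and j: "j < n" using Wc by auto
    have "complex_of_real (f (d i)) * W $$ (i,j) = W $$ (i,j) * complex_of_real (f (d' j))"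
    proof (cases "W $$ (i,j) = 0")
      case False
      hence "complex_of_real (d i) = complex_of_real (d' j)" using ent[OF i j] by simp
      hence "d i = d' j" by simp
      thus ?thesis by simp
    qed simp
    thus "(diag_of n (\<lambda>i. complex_of_real (f (d i))) * W) $$ (i, j) = (W * diag_of n (\<lambda>i. complex_of_real (f (d' i)))) $$ (i, j)"
      using diag_mult_left[OF Wc i j] diag_mult_right[OF Wc i j] by simp
  qed (use Wc in auto)
  define P where "P = U * diag_of n (\<lambda>i. complex_of_real (f (d i))) * mat_adjoint U"
  define P' where "P' = U' * diag_of n (\<lambda>i. complex_of_real (f (d' i))) * mat_adjoint U'"
  have Pc: "P \<in> carrier_mat n n" "P' \<in> carrier_mat n n" unfolding P_def P'_def using c by auto
  have "mat_adjoint U * P * U' = mat_adjoint U * P' * U'"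
    using key_left[OF U U' diag_carrier, of "\<lambda>i. complex_of_real (f (d i))"]
      key_right[OF U U' diag_carrier, of "\<lambda>i. complex_of_real (f (d' i))"] comm2 unfolding W_def P_def P'_def by simp
  hence "U * (mat_adjoint U * P * U') * mat_adjoint U' = U * (mat_adjoint U * P' * U') * mat_adjoint U'" by simp
  thus ?thesis using conj_back[OF U U' Pc(1)] conj_back[OF U U' Pc(2)] unfolding P_def P'_def by simp
qed

lemma unit_sum: assumes i: "i < n"
  shows "(\<Sum>k<n. g k * (cmod (unit_vec n i $ k))\<^sup>2) = g i"
proof -
  have "(\<Sum>k<n. g k * (cmod (unit_vec n i $ k))\<^sup>2) = (\<Sum>k<n. if k = i then g k else 0)"
    by (rule sum.cong) (auto simp: unit_vec_def)
  also have "\<dots> = g i" using i by (subst sum.delta) auto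
  finally show ?thesis .
qed

lemma quad_diag:
  assumes U: "unitary_mat n U" and v: "v \<in> carrier_vec n"
  shows "((U * diag_of n (\<lambda>i. complex_of_real (g i)) * mat_adjoint U) *\<^sub>v v) \<bullet> conjugate v
    = complex_of_real (\<Sum>k<n. g k * (cmod ((mat_adjoint U *\<^sub>v v) $ k))\<^sup>2)"
proof -
  have Uc: "U \<in> carrier_mat n n" by (rule unitary_carrier[OF U])
  have w: "mat_adjoint U *\<^sub>v v \<in> carrier_vec n" by (rule mult_mat_vec_carrier[OF adj_carrier[OF Uc] v])
  show ?thesis unfolding quad_conj[OF Uc diag_carrier v] by (rule diag_quad[OF w])
qed

lemma diag_one: "diag_of n (\<lambda>i. complex_of_real 1) = 1\<^sub>m n"
  by (rule eq_matI) auto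

lemma norm_pres:
  assumes U: "unitary_mat n U" and v: "v \<in> carrier_vec n"
  shows "(\<Sum>k<n. (cmod ((mat_adjoint U *\<^sub>v v) $ k))\<^sup>2) = (\<Sum>k<n. (cmod (v $ k))\<^sup>2)"
proof -
  have Uc: "U \<in> carrier_mat n n" by (rule unitary_carrier[OF U])
  have "complex_of_real (\<Sum>k<n. 1 * (cmod ((mat_adjoint U *\<^sub>v v) $ k))\<^sup>2)
     = ((U * diag_of n (\<lambda>i. complex_of_real 1) * mat_adjoint U) *\<^sub>v v) \<bullet> conjugate v"
    by (rule quad_diag[OF U v, symmetric])
  also have "U * diag_of n (\<lambda>i. complex_of_real 1) * mat_adjoint U = 1\<^sub>m n"
    unfolding diag_one using Uc unitary_right[OF U] by simp
  also have "1\<^sub>m n = diag_of n (\<lambda>i. complex_of_real 1)" by (rule diag_one[symmetric])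
  also have "(diag_of n (\<lambda>i. complex_of_real 1) *\<^sub>v v) \<bullet> conjugate v = complex_of_real (\<Sum>k<n. 1 * (cmod (v $ k))\<^sup>2)"
    by (rule diag_quad[OF v])
  finally have "complex_of_real (\<Sum>k<n. 1 * (cmod ((mat_adjoint U *\<^sub>v v) $ k))\<^sup>2) = complex_of_real (\<Sum>k<n. 1 * (cmod (v $ k))\<^sup>2)" .
  hence "(\<Sum>k<n. 1 * (cmod ((mat_adjoint U *\<^sub>v v) $ k))\<^sup>2) = (\<Sum>k<n. 1 * (cmod (v $ k))\<^sup>2)"
    by (rule of_real_eq_iff[THEN iffD1])
  thus ?thesis by simp
qed

lemma spectral_posdef:
  assumes X: "posdef_mat n X"
  shows "\<exists>U d. unitary_mat n U \<and> (\<forall>i<n. d i > 0) \<and> X = U * diag_of n (\<lambda>i. complex_of_real (d i)) * mat_adjoint U"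
proof -
  have Xc: "X \<in> carrier_mat n n" and hX: "mat_adjoint X = X"
    using X unfolding posdef_mat_def hermitian_mat_def by auto
  obtain U where U: "unitary_mat n U" and Dd: "diagonal_mat (mat_adjoint U * X * U)"
    using hermitian_diag[OF Xc hX] by blast
  have Uc: "U \<in> carrier_mat n n" by (rule unitary_carrier[OF U])
  define D where "D = mat_adjoint U * X * U"
  have Dc: "D \<in> carrier_mat n n" unfolding D_def using Uc Xc by auto
  have hD: "mat_adjoint D = D"
  proof -
    have "mat_adjoint D = mat_adjoint U * mat_adjoint (mat_adjoint U * X)"
      unfolding D_def by (rule adj_mult[of _ n n _ n]) (use Uc Xc in auto)
    also have "mat_adjoint (mat_adjoint U * X) = mat_adjoint X * U"
      by (subst adj_mult[of _ n n _ n]) (use Uc Xc in auto)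
    finally show ?thesis unfolding D_def hX using Uc Xc by (simp add: assoc_mult_mat[of _ n n _ n _ n])
  qed
  define d where "d i = Re (D $$ (i,i))" for i
  have Ddiag: "D = diag_of n (\<lambda>i. complex_of_real (d i))"
  proof (rule eq_matI)
    fix i j assume "i < dim_row (diag_of n (\<lambda>i. complex_of_real (d i)))" "j < dim_col (diag_of n (\<lambda>i. complex_of_real (d i)))"
    hence i: "i < n" and j: "j < n" by auto
    show "D $$ (i, j) = diag_of n (\<lambda>i. complex_of_real (d i)) $$ (i, j)"
    proof (cases "i = j")
      case True
      have "D $$ (i,i) = mat_adjoint D $$ (i,i)" using hD by simp
      also have "\<dots> = cnj (D $$ (i,i))" using i Dc by simp
      finally have "Im (D $$ (i,i)) = 0" by (metis cnj.simps(2) complex.sel(2) neg_equal_zero)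
      hence "D $$ (i,i) = complex_of_real (d i)" unfolding d_def by (simp add: complex_eq_iff)
      thus ?thesis using True i by simp
    next
      case False
      thus ?thesis using Dd i j Dc unfolding D_def diagonal_mat_def by auto
    qed
  qed (use Dc in auto)
  have XD: "X = U * D * mat_adjoint U" unfolding D_def using conj_back[OF U U Xc] by simp
  have dpos: "d i > 0" if i: "i < n" for i
  proof -
    define w where "w = U *\<^sub>v unit_vec n i"
    have wc: "w \<in> carrier_vec n" unfolding w_def using Uc by auto
    have aw: "mat_adjoint U *\<^sub>v w = unit_vec n i"
    proof -
      have "mat_adjoint U *\<^sub>v w = (mat_adjoint U * U) *\<^sub>v unit_vec n i"
        unfolding w_def by (rule assoc_mult_mat_vec[symmetric, of _ n n _ n]) (use Uc in auto)
      thus ?thesis using unitary_left[OF U] by simp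
    qed
    have w0: "w \<noteq> 0\<^sub>v n"
    proof
      assume "w = 0\<^sub>v n"
      hence "unit_vec n i $ i = (mat_adjoint U *\<^sub>v 0\<^sub>v n) $ i" using aw by simp
      also have "\<dots> = 0" using i Uc by simp
      finally show False using i by simp
    qed
    have "Re ((X *\<^sub>v w) \<bullet> conjugate w) > 0"
      using X wc w0 unfolding posdef_mat_def Let_def by auto
    also have "(X *\<^sub>v w) \<bullet> conjugate w = complex_of_real (\<Sum>k<n. d k * (cmod ((mat_adjoint U *\<^sub>v w) $ k))\<^sup>2)"
      unfolding XD Ddiag by (rule quad_diag[OF U wc])
    also have "(\<Sum>k<n. d k * (cmod ((mat_adjoint U *\<^sub>v w) $ k))\<^sup>2) = d i"
      unfolding aw by (rule unit_sum[OF i])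
    finally show ?thesis by simp
  qed
  show ?thesis using U dpos XD Ddiag by blast
qed

lemma rpow_repr:
  assumes U: "unitary_mat n U" and d: "\<forall>i<n. d i > 0"
    and X: "X = U * diag_of n (\<lambda>i. complex_of_real (d i)) * mat_adjoint U"
  shows "mat_rpow n X r = U * diag_of n (\<lambda>i. complex_of_real (d i powr r)) * mat_adjoint U"
proof -
  let ?P = "\<lambda>M. \<exists>U d. unitary_mat n U \<and> (\<forall>i<n. d i > 0) \<and>
      X = U * diag_of n (\<lambda>i. complex_of_real (d i)) * mat_adjoint U \<and>
      M = U * diag_of n (\<lambda>i. complex_of_real (d i powr r)) * mat_adjoint U"
  have ex: "\<exists>M. ?P M" using U d X by blast
  have "?P (mat_rpow n X r)" unfolding mat_rpow_def by (rule someI_ex[OF ex])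
  then obtain U' d' where U': "unitary_mat n U'" and X': "X = U' * diag_of n (\<lambda>i. complex_of_real (d' i)) * mat_adjoint U'"
    and M: "mat_rpow n X r = U' * diag_of n (\<lambda>i. complex_of_real (d' i powr r)) * mat_adjoint U'" by blast
  have "U' * diag_of n (\<lambda>i. complex_of_real (d' i powr r)) * mat_adjoint U'
      = U * diag_of n (\<lambda>i. complex_of_real (d i powr r)) * mat_adjoint U"
    by (rule calc_unique[OF U' U, of d' d "\<lambda>x. x powr r"]) (use X X' in simp)
  thus ?thesis using M by simp
qed

lemma tangent_powr:
  fixes z r :: real assumes z: "z > 0" and r: "r \<ge> 0"
  shows "1 + r - r * z \<le> z powr (- r)"
proof -
  have "z powr (-r) = exp (- r * ln z)" using z by (simp add: powr_def)
  also have "\<dots> \<ge> 1 + (- r * ln z)" by (rule exp_ge_add_one_self)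
  finally have a: "1 - r * ln z \<le> z powr (-r)" by simp
  have "ln z \<le> z - 1" using z by (rule ln_le_minus_one)
  hence "r * ln z \<le> r * (z - 1)" using r by (rule mult_left_mono)
  with a show ?thesis by (simp add: algebra_simps)
qed

lemma max_bound:
  fixes w q :: real assumes w: "0 < w" "w < 1" and q: "q > 0"
  shows "(1 - w) * w powr q \<le> q powr q / (q + 1) powr (q + 1)"
proof -
  define z where "z = w * (q + 1) / q"
  have z: "z > 0" using w q by (simp add: z_def)
  have "1 + q - q * z \<le> z powr (-q)" using tangent_powr[OF z] q by simp
  moreover have "1 + q - q * z = (q + 1) * (1 - w)" using q by (simp add: z_def field_simps)
  moreover have "z powr (-q) = w powr (-q) * (q powr q / (q+1) powr q)"
  proof -
    have "z powr (-q) = inverse (z powr q)" using z by (simp add: powr_minus)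
    also have "z powr q = (w * (q+1)) powr q / q powr q" unfolding z_def
      using w q by (simp add: powr_divide)
    also have "(w * (q+1)) powr q = w powr q * (q+1) powr q" using w q by (simp add: powr_mult)
    finally show ?thesis using w q by (simp add: powr_minus field_simps)
  qed
  ultimately have h: "(q + 1) * (1 - w) \<le> w powr (-q) * (q powr q / (q+1) powr q)" by simp
  have wq: "w powr q > 0" using w by simp
  have "(q + 1) * ((1 - w) * w powr q) \<le> (w powr (-q) * w powr q) * (q powr q / (q+1) powr q)"
    using mult_right_mono[OF h less_imp_le[OF wq]] by (simp add: algebra_simps)
  also have "w powr (-q) * w powr q = 1" using w by (simp add: powr_minus)
  finally have f: "(q + 1) * ((1 - w) * w powr q) \<le> q powr q / (q+1) powr q" by simp
  have "(1 - w) * w powr q \<le> (q powr q / (q+1) powr q) / (q + 1)"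
    using f q by (subst pos_le_divide_eq) (auto simp: mult.commute)
  moreover have "(q+1) powr (q+1) = (q+1) powr q * (q+1)" using q
    by (simp add: powr_add)
  ultimately show ?thesis by (simp add: divide_divide_eq_left)
qed

lemma real_main:
  fixes k r q qt x \<mu> :: real
  assumes k: "k > 1" and q: "q > 0" "q \<le> r" "r \<le> qt" and x: "x > 0" and mu: "\<mu> \<ge> 0"
    and h: "x + \<mu> * x powr (- r) < k"
  shows "\<mu> < q powr q * k powr (1 + qt) / (q + 1) powr (q + 1)"
proof -
  have xr: "x powr (-r) > 0" "x powr r > 0" using x by auto
  have xk: "x < k" using h mu xr by (smt (verit) mult_nonneg_nonneg)
  have "\<mu> * x powr (-r) * x powr r < (k - x) * x powr r" using h xr
    by (intro mult_strict_right_mono) auto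
  moreover have "x powr (-r) * x powr r = 1" using x by (simp add: powr_add[symmetric])
  ultimately have m1: "\<mu> < (k - x) * x powr r" by (simp add: mult.assoc)
  define w where "w = x / k"
  have w: "0 < w" "w < 1" using x xk k by (auto simp: w_def)
  have xw: "x = k * w" using k by (simp add: w_def)
  have "(k - x) * x powr r = k powr (1 + r) * ((1 - w) * w powr r)"
    using k w by (simp add: xw powr_mult powr_add algebra_simps)
  also have "\<dots> \<le> k powr (1 + qt) * ((1 - w) * w powr q)"
  proof (rule mult_mono)
    show "k powr (1 + r) \<le> k powr (1 + qt)" using k q by (intro powr_mono) auto
    show "(1 - w) * w powr r \<le> (1 - w) * w powr q" using w q
      by (intro mult_left_mono powr_mono') auto
  qed (use w k in auto)
  also have "\<dots> \<le> k powr (1 + qt) * (q powr q / (q + 1) powr (q + 1))"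
    using max_bound[OF w q(1)] k by (intro mult_left_mono) auto
  finally have "(k - x) * x powr r \<le> q powr q * k powr (1 + qt) / (q + 1) powr (q + 1)"
    by (simp add: mult.commute)
  thus ?thesis using m1 by linarith
qed

lemma jensen:
  fixes c d :: "nat \<Rightarrow> real" and s t :: real
  assumes c: "\<And>k. k \<in> I \<Longrightarrow> c k \<ge> 0" and N: "sum c I > 0" and d: "\<And>k. k \<in> I \<Longrightarrow> d k > 0"
    and s: "s > 0" and t: "t \<ge> 0"
  shows "(\<Sum>k\<in>I. c k * d k powr s) > 0"
    "(\<Sum>k\<in>I. c k * d k powr (-t)) \<ge> sum c I * ((\<Sum>k\<in>I. c k * d k powr s) / sum c I) powr (-(t/s))"
proof -
  have fin: "finite I" using N by (metis less_irrefl sum.infinite)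
  obtain k0 where k0: "k0 \<in> I" "c k0 > 0"
  proof (rule ccontr)
    assume "\<not> thesis"
    hence "\<And>k. k \<in> I \<Longrightarrow> c k \<le> 0" using that by force
    hence "sum c I \<le> 0" by (simp add: sum_nonpos)
    thus False using N by simp
  qed
  define S where "S = (\<Sum>k\<in>I. c k * d k powr s)"
  have "c k0 * d k0 powr s \<le> S" unfolding S_def
    by (rule member_le_sum[OF k0(1) _ fin]) (use c d in \<open>auto intro: mult_nonneg_nonneg\<close>)
  moreover have "c k0 * d k0 powr s > 0"
  proof -
    have "d k0 powr s > 0" using d[OF k0(1)] by simp
    thus ?thesis using k0(2) by (rule mult_pos_pos[rotated])
  qed
  ultimately have Sp: "S > 0" by linarith
  thus "(\<Sum>k\<in>I. c k * d k powr s) > 0" unfolding S_def .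
  define Nn where "Nn = sum c I"
  define x where "x = S / Nn"
  have x: "x > 0" unfolding x_def Nn_def using Sp N by simp
  define r where "r = t / s"
  have r: "r \<ge> 0" unfolding r_def using s t by simp
  have each: "x powr (-r) * (1 + r - r * (d k powr s / x)) \<le> d k powr (-t)" if k: "k \<in> I" for k
  proof -
    have z: "d k powr s / x > 0" using d[OF k] x by simp
    have "1 + r - r * (d k powr s / x) \<le> (d k powr s / x) powr (-r)" by (rule tangent_powr[OF z r])
    also have "(d k powr s / x) powr (-r) = d k powr (-t) * x powr r"
    proof -
      have "(d k powr s / x) powr (-r) = (d k powr s) powr (-r) / x powr (-r)"
        using d[OF k] x by (simp add: powr_divide)
      also have "(d k powr s) powr (-r) = d k powr (-t)"
        using s unfolding r_def by (simp add: powr_powr)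
      also have "x powr (-r) = inverse (x powr r)" using x by (simp add: powr_minus)
      finally show ?thesis by (simp add: divide_inverse)
    qed
    finally have h: "1 + r - r * (d k powr s / x) \<le> d k powr (-t) * x powr r" .
    have xr: "x powr (-r) > 0" using x by simp
    have "x powr (-r) * (1 + r - r * (d k powr s / x)) \<le> x powr (-r) * (d k powr (-t) * x powr r)"
      using mult_left_mono[OF h less_imp_le[OF xr]] .
    also have "\<dots> = d k powr (-t) * (x powr (-r) * x powr r)" by simp
    also have "x powr (-r) * x powr r = 1" using x by (simp add: powr_add[symmetric])
    finally show ?thesis by simp
  qed
  have L1: "(\<Sum>k\<in>I. c k * (x powr (-r) * (1 + r - r * (d k powr s / x)))) \<le> (\<Sum>k\<in>I. c k * d k powr (-t))"
    by (rule sum_mono) (use each c in \<open>auto intro: mult_left_mono\<close>)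
  have L2: "(\<Sum>k\<in>I. c k * (x powr (-r) * (1 + r - r * (d k powr s / x))))
      = x powr (-r) * ((1 + r) * Nn - (r / x) * S)"
  proof -
    have "(\<Sum>k\<in>I. c k * (x powr (-r) * (1 + r - r * (d k powr s / x))))
        = (\<Sum>k\<in>I. (x powr (-r) * (1 + r)) * c k - (x powr (-r) * (r / x)) * (c k * d k powr s))"
      by (rule sum.cong) (simp_all add: algebra_simps)
    also have "\<dots> = (x powr (-r) * (1 + r)) * Nn - (x powr (-r) * (r / x)) * S"
      unfolding Nn_def S_def by (simp add: sum_subtractf sum_distrib_left)
    finally show ?thesis by (simp add: algebra_simps)
  qed
  have L3: "(r / x) * S = r * Nn" unfolding x_def using Sp N Nn_def by simp
  have "x powr (-r) * ((1 + r) * Nn - (r / x) * S) = x powr (-r) * Nn"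
    unfolding L3 by (simp add: algebra_simps)
  hence "x powr (-r) * Nn \<le> (\<Sum>k\<in>I. c k * d k powr (-t))" using L1 L2 by linarith
  thus "(\<Sum>k\<in>I. c k * d k powr (-t)) \<ge> sum c I * ((\<Sum>k\<in>I. c k * d k powr s) / sum c I) powr (-(t/s))"
    unfolding x_def S_def Nn_def r_def by (simp add: mult.commute)
qed

lemma U_unit:
  assumes U: "unitary_mat n U" and i: "i < n"
  shows "U *\<^sub>v unit_vec n i \<in> carrier_vec n" "mat_adjoint U *\<^sub>v (U *\<^sub>v unit_vec n i) = unit_vec n i"
    "U *\<^sub>v unit_vec n i \<noteq> 0\<^sub>v n"
proof -
  have Uc: "U \<in> carrier_mat n n" by (rule unitary_carrier[OF U])
  show wc: "U *\<^sub>v unit_vec n i \<in> carrier_vec n" using Uc by auto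
  have "mat_adjoint U *\<^sub>v (U *\<^sub>v unit_vec n i) = (mat_adjoint U * U) *\<^sub>v unit_vec n i"
    by (rule assoc_mult_mat_vec[symmetric, of _ n n _ n]) (use Uc in auto)
  thus aw: "mat_adjoint U *\<^sub>v (U *\<^sub>v unit_vec n i) = unit_vec n i" using unitary_left[OF U] by simp
  show "U *\<^sub>v unit_vec n i \<noteq> 0\<^sub>v n"
  proof
    assume "U *\<^sub>v unit_vec n i = 0\<^sub>v n"
    hence "unit_vec n i $ i = (mat_adjoint U *\<^sub>v 0\<^sub>v n) $ i" using aw by simp
    also have "\<dots> = 0" using i Uc by simp
    finally show False using i by simp
  qed
qed

lemma eig_decomp:
  assumes U: "unitary_mat n U" and Q: "Q = U * diag_of n (\<lambda>i. complex_of_real (e i)) * mat_adjoint U"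
    and k: "k < n"
  shows "complex_of_real (e k) \<in> spectrum Q"
proof -
  have Uc: "U \<in> carrier_mat n n" by (rule unitary_carrier[OF U])
  define w where "w = U *\<^sub>v unit_vec n k"
  note uu = U_unit[OF U k, folded w_def]
  have Dv: "diag_of n (\<lambda>i. complex_of_real (e i)) *\<^sub>v unit_vec n k = complex_of_real (e k) \<cdot>\<^sub>v unit_vec n k"
    by (subst diag_mult_vec) (auto intro!: eq_vecI simp: unit_vec_def)
  have "Q *\<^sub>v w = (U * diag_of n (\<lambda>i. complex_of_real (e i))) *\<^sub>v (mat_adjoint U *\<^sub>v w)"
    unfolding Q by (rule assoc_mult_mat_vec[of _ n n _ n]) (use Uc uu in auto)
  also have "\<dots> = U *\<^sub>v (diag_of n (\<lambda>i. complex_of_real (e i)) *\<^sub>v unit_vec n k)"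
    unfolding uu(2) by (rule assoc_mult_mat_vec[of _ n n _ n]) (use Uc in auto)
  also have "\<dots> = complex_of_real (e k) \<cdot>\<^sub>v w" unfolding Dv w_def
    by (rule mult_mat_vec[of _ n n]) (use Uc in auto)
  finally have "Q *\<^sub>v w = complex_of_real (e k) \<cdot>\<^sub>v w" .
  moreover have "dim_row Q = n" unfolding Q using Uc by simp
  ultimately show ?thesis using uu unfolding spectrum_def eigenvalue_def eigenvector_def by auto
qed

lemma lmax_bound:
  assumes Q: "Q \<in> carrier_mat n n" and e: "complex_of_real a \<in> spectrum Q"
  shows "a \<le> lambda_max Q"
proof -
  have fin: "finite (Re ` spectrum Q)" using card_finite_spectrum(1)[OF Q] by simp
  have "a \<in> Re ` spectrum Q" using e by force
  thus ?thesis unfolding lambda_max_def using fin by simp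
qed

lemma sandwich:
  assumes A: "A \<in> carrier_mat n n" and M: "M \<in> carrier_mat n n" and v: "v \<in> carrier_vec n"
  shows "((mat_adjoint A * M * A) *\<^sub>v v) \<bullet> conjugate v = (M *\<^sub>v (A *\<^sub>v v)) \<bullet> conjugate (A *\<^sub>v v)"
proof -
  have Av: "A *\<^sub>v v \<in> carrier_vec n" using A v by simp
  have MAv: "M *\<^sub>v (A *\<^sub>v v) \<in> carrier_vec n" using M Av by simp
  have "(mat_adjoint A * M * A) *\<^sub>v v = (mat_adjoint A * M) *\<^sub>v (A *\<^sub>v v)"
    by (rule assoc_mult_mat_vec[of _ n n _ n]) (use A M v in auto)
  also have "\<dots> = mat_adjoint A *\<^sub>v (M *\<^sub>v (A *\<^sub>v v))"
    by (rule assoc_mult_mat_vec[of _ n n _ n]) (use A M Av in auto)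
  finally show ?thesis using adj_ident[OF A MAv v] by simp
qed

lemma smult_quad:
  fixes a :: complex
  assumes M: "M \<in> carrier_mat n n" and v: "v \<in> carrier_vec n"
  shows "(M *\<^sub>v (a \<cdot>\<^sub>v v)) \<bullet> conjugate (a \<cdot>\<^sub>v v) = (a * cnj a) * ((M *\<^sub>v v) \<bullet> conjugate v)"
proof -
  have Mv: "M *\<^sub>v v \<in> carrier_vec n" using M v by simp
  have "M *\<^sub>v (a \<cdot>\<^sub>v v) = a \<cdot>\<^sub>v (M *\<^sub>v v)" by (rule mult_mat_vec[OF M v])
  moreover have "conjugate (a \<cdot>\<^sub>v v) = cnj a \<cdot>\<^sub>v conjugate v" by (simp add: conjugate_smult_vec)
  ultimately show ?thesis using Mv v by (simp add: mult.assoc)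
qed

lemma normsq_pos:
  assumes v: "v \<in> carrier_vec n" and v0: "v \<noteq> 0\<^sub>v n"
  shows "(\<Sum>k<n. (cmod (v $ k))\<^sup>2) > 0"
proof -
  obtain k where k: "k < n" "v $ k \<noteq> 0"
  proof (rule ccontr)
    assume "\<not> thesis"
    hence "\<And>k. k < n \<Longrightarrow> v $ k = 0" using that by blast
    hence "v = 0\<^sub>v n" using v by (intro eq_vecI) auto
    thus False using v0 by simp
  qed
  have "(cmod (v $ k))\<^sup>2 \<le> (\<Sum>k<n. (cmod (v $ k))\<^sup>2)"
    by (rule member_le_sum) (use k in auto)
  moreover have "(cmod (v $ k))\<^sup>2 > 0" using k by simp
  ultimately show ?thesis by linarith
qed

lemma core:
  fixes A B Q X :: "complex mat" and s t p :: real and lam :: complex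
  assumes s: "s > 0" and t: "t \<ge> 0"
    and A: "A \<in> carrier_mat n n" and B: "B \<in> carrier_mat n n" and Binv: "invertible_mat B"
    and Q: "posdef_mat n Q" and X: "posdef_mat n X"
    and eq: "mat_rpow n X s + mat_adjoint A * mat_rpow n X (- t) * A + mat_adjoint B * mat_rpow n X (- p) * B = Q"
    and lam: "lam \<in> spectrum A"
  shows "\<exists>x>0. x + (cmod lam)\<^sup>2 * x powr (-(t/s)) < lambda_max Q"
proof -
  obtain U d where U: "unitary_mat n U" and dpos: "\<forall>i<n. d i > 0"
    and XU: "X = U * diag_of n (\<lambda>i. complex_of_real (d i)) * mat_adjoint U"
    using spectral_posdef[OF X] by blast
  obtain UQ e where UQ: "unitary_mat n UQ"
    and QU: "Q = UQ * diag_of n (\<lambda>i. complex_of_real (e i)) * mat_adjoint UQ"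
    using spectral_posdef[OF Q] by blast
  have Uc: "U \<in> carrier_mat n n" by (rule unitary_carrier[OF U])
  have Qc: "Q \<in> carrier_mat n n" using Q unfolding posdef_mat_def hermitian_mat_def by auto
  define Xs where "Xs = U * diag_of n (\<lambda>i. complex_of_real (d i powr s)) * mat_adjoint U"
  define Xt where "Xt = U * diag_of n (\<lambda>i. complex_of_real (d i powr (-t))) * mat_adjoint U"
  define Xp where "Xp = U * diag_of n (\<lambda>i. complex_of_real (d i powr (-p))) * mat_adjoint U"
  have Xsc: "Xs \<in> carrier_mat n n" and Xtc: "Xt \<in> carrier_mat n n" and Xpc: "Xp \<in> carrier_mat n n"
    unfolding Xs_def Xt_def Xp_def using Uc by auto
  have eq': "Q = Xs + mat_adjoint A * Xt * A + mat_adjoint B * Xp * B"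
    using eq rpow_repr[OF U dpos XU] unfolding Xs_def Xt_def Xp_def by simp
  obtain v where v: "v \<in> carrier_vec n" "v \<noteq> 0\<^sub>v n" and Av: "A *\<^sub>v v = lam \<cdot>\<^sub>v v"
    using lam A unfolding spectrum_def eigenvalue_def eigenvector_def by auto
  have Bv: "B *\<^sub>v v \<in> carrier_vec n" using B v by simp
  have Bv0: "B *\<^sub>v v \<noteq> 0\<^sub>v n"
  proof
    assume B0: "B *\<^sub>v v = 0\<^sub>v n"
    obtain B' where BB': "B' * B = 1\<^sub>m (dim_row B')" and BB'': "B * B' = 1\<^sub>m (dim_row B)"
      using Binv unfolding invertible_mat_def inverts_mat_def by auto
    have B'c: "B' \<in> carrier_mat n n"
    proof -
      have "dim_col B' = n" using arg_cong[OF BB'', of dim_col] B by simp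
      moreover have "dim_row B' = n" using arg_cong[OF BB', of dim_col] B by simp
      ultimately show ?thesis by auto
    qed
    have "v = (B' * B) *\<^sub>v v" using BB' B'c v by simp
    also have "\<dots> = B' *\<^sub>v (B *\<^sub>v v)" by (rule assoc_mult_mat_vec[of _ n n _ n]) (use B'c B v in auto)
    also have "\<dots> = 0\<^sub>v n" unfolding B0 using B'c
      by (intro eq_vecI) auto
    finally show False using v by simp
  qed
  define c where "c k = (cmod ((mat_adjoint U *\<^sub>v v) $ k))\<^sup>2" for k
  define N where "N = (\<Sum>k<n. c k)"
  have N: "N = (\<Sum>k<n. (cmod (v $ k))\<^sup>2)" unfolding N_def c_def by (rule norm_pres[OF U v(1)])
  have Npos: "N > 0" unfolding N by (rule normsq_pos[OF v])
  define S where "S = (\<Sum>k<n. c k * d k powr s)"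
  define T where "T = (\<Sum>k<n. c k * d k powr (-t))"
  define P3 where "P3 = (\<Sum>k<n. d k powr (-p) * (cmod ((mat_adjoint U *\<^sub>v (B *\<^sub>v v)) $ k))\<^sup>2)"
  define NQ where "NQ = (\<Sum>k<n. e k * (cmod ((mat_adjoint UQ *\<^sub>v v) $ k))\<^sup>2)"
  define \<mu> where "\<mu> = (cmod lam)\<^sup>2"
  have mu: "\<mu> \<ge> 0" unfolding \<mu>_def by simp
  have fs: "(Xs *\<^sub>v v) \<bullet> conjugate v = complex_of_real S"
    unfolding Xs_def S_def c_def using quad_diag[OF U v(1)] by (simp add: mult.commute)
  have ft: "((mat_adjoint A * Xt * A) *\<^sub>v v) \<bullet> conjugate v = complex_of_real (\<mu> * T)"
  proof -
    have "((mat_adjoint A * Xt * A) *\<^sub>v v) \<bullet> conjugate v = (Xt *\<^sub>v (lam \<cdot>\<^sub>v v)) \<bullet> conjugate (lam \<cdot>\<^sub>v v)"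
      using sandwich[OF A Xtc v(1)] Av by simp
    also have "\<dots> = (lam * cnj lam) * ((Xt *\<^sub>v v) \<bullet> conjugate v)" by (rule smult_quad[OF Xtc v(1)])
    also have "(Xt *\<^sub>v v) \<bullet> conjugate v = complex_of_real T"
      unfolding Xt_def T_def c_def using quad_diag[OF U v(1)] by (simp add: mult.commute)
    also have "lam * cnj lam = complex_of_real \<mu>" unfolding \<mu>_def by (simp add: complex_norm_square[symmetric])
    finally show ?thesis by simp
  qed
  have fp: "((mat_adjoint B * Xp * B) *\<^sub>v v) \<bullet> conjugate v = complex_of_real P3"
    using sandwich[OF B Xpc v(1)] quad_diag[OF U Bv] unfolding Xp_def P3_def by simp
  have fq: "(Q *\<^sub>v v) \<bullet> conjugate v = complex_of_real NQ"
    unfolding NQ_def QU by (rule quad_diag[OF UQ v(1)])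
  have M2c: "mat_adjoint A * Xt * A \<in> carrier_mat n n" using A Xtc by auto
  have M3c: "mat_adjoint B * Xp * B \<in> carrier_mat n n" using B Xpc by auto
  have "Q *\<^sub>v v = Xs *\<^sub>v v + ((mat_adjoint A * Xt * A) *\<^sub>v v + (mat_adjoint B * Xp * B) *\<^sub>v v)"
    unfolding eq' using Xsc M2c M3c v by (simp add: add_mult_distrib_mat_vec[of _ n n])
  hence "(Q *\<^sub>v v) \<bullet> conjugate v = (Xs *\<^sub>v v) \<bullet> conjugate v + (((mat_adjoint A * Xt * A) *\<^sub>v v) \<bullet> conjugate v
      + ((mat_adjoint B * Xp * B) *\<^sub>v v) \<bullet> conjugate v)"
    using Xsc M2c M3c v by (simp add: add_scalar_prod_distrib[of _ n])
  hence main: "NQ = S + (\<mu> * T + P3)" unfolding fs ft fp fq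
    by (metis of_real_add of_real_eq_iff)
  have NQle: "NQ \<le> lambda_max Q * N"
  proof -
    have "NQ \<le> (\<Sum>k<n. lambda_max Q * (cmod ((mat_adjoint UQ *\<^sub>v v) $ k))\<^sup>2)"
      unfolding NQ_def
    proof (rule sum_mono)
      fix k assume "k \<in> {..<n}"
      hence k: "k < n" by simp
      have "e k \<le> lambda_max Q" by (rule lmax_bound[OF Qc eig_decomp[OF UQ QU k]])
      thus "e k * (cmod ((mat_adjoint UQ *\<^sub>v v) $ k))\<^sup>2 \<le> lambda_max Q * (cmod ((mat_adjoint UQ *\<^sub>v v) $ k))\<^sup>2"
        by (rule mult_right_mono) simp
    qed
    also have "\<dots> = lambda_max Q * N"
      unfolding N norm_pres[OF UQ v(1), symmetric] by (simp add: sum_distrib_left)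
    finally show ?thesis .
  qed
  have P3pos: "P3 > 0"
  proof -
    have pos: "(\<Sum>k<n. (cmod ((mat_adjoint U *\<^sub>v (B *\<^sub>v v)) $ k))\<^sup>2) > 0"
      unfolding norm_pres[OF U Bv] by (rule normsq_pos[OF Bv Bv0])
    obtain k where k: "k < n" "(cmod ((mat_adjoint U *\<^sub>v (B *\<^sub>v v)) $ k))\<^sup>2 > 0"
    proof (rule ccontr)
      assume "\<not> thesis"
      hence "\<And>k. k < n \<Longrightarrow> (cmod ((mat_adjoint U *\<^sub>v (B *\<^sub>v v)) $ k))\<^sup>2 \<le> 0" using that by force
      hence "(\<Sum>k<n. (cmod ((mat_adjoint U *\<^sub>v (B *\<^sub>v v)) $ k))\<^sup>2) \<le> 0" by (intro sum_nonpos) auto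
      thus False using pos by simp
    qed
    have "d k powr (-p) * (cmod ((mat_adjoint U *\<^sub>v (B *\<^sub>v v)) $ k))\<^sup>2 \<le> P3"
      unfolding P3_def by (rule member_le_sum) (use k in auto)
    moreover have "d k powr (-p) * (cmod ((mat_adjoint U *\<^sub>v (B *\<^sub>v v)) $ k))\<^sup>2 > 0"
    proof -
      have "d k > 0" using k(1) dpos by simp
      hence "d k powr (-p) > 0" by simp
      thus ?thesis using k(2) by (rule mult_pos_pos)
    qed
    ultimately show ?thesis by linarith
  qed
  have cnn: "\<And>k. k \<in> {..<n} \<Longrightarrow> c k \<ge> 0" unfolding c_def by simp
  have dp: "\<And>k. k \<in> {..<n} \<Longrightarrow> d k > 0" using dpos by simp
  have Nsum: "sum c {..<n} > 0" using Npos unfolding N_def .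
  note J = jensen[OF cnn Nsum dp s t]
  have Spos: "S > 0" unfolding S_def using J(1) .
  define x where "x = S / N"
  have x: "x > 0" unfolding x_def using Spos Npos by simp
  have TJ: "T \<ge> N * x powr (-(t/s))" using J(2) unfolding T_def S_def x_def N_def .
  have "\<mu> * (N * x powr (-(t/s))) \<le> \<mu> * T" using mult_left_mono[OF TJ mu] .
  hence "S + \<mu> * (N * x powr (-(t/s))) < lambda_max Q * N" using main NQle P3pos by linarith
  hence "(x + \<mu> * x powr (-(t/s))) * N < lambda_max Q * N"
    unfolding x_def using Npos by (simp add: algebra_simps)
  hence "x + \<mu> * x powr (-(t/s)) < lambda_max Q" using Npos by simp
  thus ?thesis using x unfolding \<mu>_def by blast
qed

theorem mainTheorem3:
  fixes n :: nat and s t p :: real and A B Q :: "complex mat"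
  assumes n: "n > 0"
    and st: "s \<ge> 1" and tt: "t \<ge> 1" and pt: "p \<ge> 1"
    and A: "A \<in> carrier_mat n n" and Ainv: "invertible_mat A"
    and B: "B \<in> carrier_mat n n" and Binv: "invertible_mat B"
    and Q: "posdef_mat n Q" and k: "lambda_max Q > 1"
    and sol: "\<exists>X. posdef_mat n X \<and>
       mat_rpow n X s + mat_adjoint A * mat_rpow n X (- t) * A
         + mat_adjoint B * mat_rpow n X (- p) * B = Q"
  shows "let q = min (t / s) (p / s); qt = max (t / s) (p / s); k = lambda_max Q;
             bound = q powr q * k powr (1 + qt) / (q + 1) powr (q + 1)
         in (spectral_radius A)\<^sup>2 < bound \<and> (spectral_radius B)\<^sup>2 < bound"
proof -
  obtain X where X: "posdef_mat n X" and eqX: "mat_rpow n X s + mat_adjoint A * mat_rpow n X (- t) * A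
         + mat_adjoint B * mat_rpow n X (- p) * B = Q" using sol by blast
  define q where "q = min (t / s) (p / s)"
  define qt where "qt = max (t / s) (p / s)"
  define K where "K = lambda_max Q"
  define bound where "bound = q powr q * K powr (1 + qt) / (q + 1) powr (q + 1)"
  have s0: "s > 0" using st by simp
  have q0: "q > 0" unfolding q_def using s0 tt pt by simp
  have K1: "K > 1" unfolding K_def using k .
  have rc: "\<And>r. mat_rpow n X r \<in> carrier_mat n n"
  proof -
    fix r
    obtain U d where U: "unitary_mat n U" and dpos: "\<forall>i<n. d i > 0"
      and XU: "X = U * diag_of n (\<lambda>i. complex_of_real (d i)) * mat_adjoint U"
      using spectral_posdef[OF X] by blast
    show "mat_rpow n X r \<in> carrier_mat n n" unfolding rpow_repr[OF U dpos XU]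
      using unitary_carrier[OF U] by auto
  qed
  have M2: "mat_adjoint A * mat_rpow n X (- t) * A \<in> carrier_mat n n" using A rc by auto
  have M3: "mat_adjoint B * mat_rpow n X (- p) * B \<in> carrier_mat n n" using B rc by auto
  have eqX2: "mat_rpow n X s + mat_adjoint B * mat_rpow n X (- p) * B
         + mat_adjoint A * mat_rpow n X (- t) * A = Q"
  proof -
    have "mat_rpow n X s + mat_adjoint B * mat_rpow n X (- p) * B + mat_adjoint A * mat_rpow n X (- t) * A
      = mat_rpow n X s + (mat_adjoint B * mat_rpow n X (- p) * B + mat_adjoint A * mat_rpow n X (- t) * A)"
      by (rule assoc_add_mat[OF rc M3 M2])
    also have "mat_adjoint B * mat_rpow n X (- p) * B + mat_adjoint A * mat_rpow n X (- t) * A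
      = mat_adjoint A * mat_rpow n X (- t) * A + mat_adjoint B * mat_rpow n X (- p) * B"
      by (rule comm_add_mat[OF M3 M2])
    also have "mat_rpow n X s + (mat_adjoint A * mat_rpow n X (- t) * A + mat_adjoint B * mat_rpow n X (- p) * B)
      = mat_rpow n X s + mat_adjoint A * mat_rpow n X (- t) * A + mat_adjoint B * mat_rpow n X (- p) * B"
      by (rule assoc_add_mat[OF rc M2 M3, symmetric])
    finally show ?thesis using eqX by simp
  qed
  have resA: "(spectral_radius A)\<^sup>2 < bound"
  proof -
    obtain lam where lam: "lam \<in> spectrum A" and rho: "spectral_radius A = cmod lam"
      using spectral_radius_mem_max(1)[OF A n] by auto
    obtain x where x: "x > 0" and hx: "x + (cmod lam)\<^sup>2 * x powr (-(t/s)) < lambda_max Q"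
      using core[OF s0 _ A B Binv Q X eqX lam] tt by auto
    have "(cmod lam)\<^sup>2 < q powr q * K powr (1 + qt) / (q + 1) powr (q + 1)"
      by (rule real_main[OF K1 q0 _ _ x _ hx[folded K_def]]) (auto simp: q_def qt_def)
    thus ?thesis unfolding rho bound_def .
  qed
  have resB: "(spectral_radius B)\<^sup>2 < bound"
  proof -
    obtain lam where lam: "lam \<in> spectrum B" and rho: "spectral_radius B = cmod lam"
      using spectral_radius_mem_max(1)[OF B n] by auto
    obtain x where x: "x > 0" and hx: "x + (cmod lam)\<^sup>2 * x powr (-(p/s)) < lambda_max Q"
      using core[OF s0 _ B A Ainv Q X eqX2 lam] pt by auto
    have "(cmod lam)\<^sup>2 < q powr q * K powr (1 + qt) / (q + 1) powr (q + 1)"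
      by (rule real_main[OF K1 q0 _ _ x _ hx[folded K_def]]) (auto simp: q_def qt_def)
    thus ?thesis unfolding rho bound_def .
  qed
  show ?thesis unfolding Let_def using resA resB unfolding bound_def q_def qt_def K_def by simp
qed

end
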